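(* For every $n\ge 2$, $$N(n)=\left(\sum_{i=0}^{n-1}\frac{(n-1)!}{i!}\right)N(n-1),$$ where $N(1)=1$.
   Context: A semi-Heyting algebra is an algebra $\langle L,\vee,\wedge,\to,0,1\rangle$ such that: (SH1) $\langle L,\vee,\wedge,0,1\rangle$ is a bounded lattice with least element $0$ and greatest element $1$; (SH2) $x\wedge(x\to y)=x\wedge y$; (SH3) $x\wedge(y\to z)=x\wedge[(x\wedge y)\to(x\wedge z)]$; (SH4) $x\to x=1$, for all $x,y,z\in L$. For $n\ge 1$, $C_n$ denotes the chain $a_0<a_1<\cdots<a_{n-1}$ with $0=a_0$, $1=a_{n-1}$ (for $n=1$, $0=1$), with $\wedge=\min$, $\vee=\max$. $N(n)$ denotes the number of binary operations $\to$ on $C_n$ such that $\langle C_n,\vee,\wedge,\to,0,1\rangle$ is a semi-Heyting algebra. *)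

theory Defs
  imports "HOL-Library.FuncSet" Complex_Main
begin

text \<open>The chain C_n is modelled by the carrier {0..<n} of naturals, with
  element a_i represented by i; meet is min, join is max, 0 = 0 and 1 = n - 1.
  A binary operation on C_n is an extensional (curried) function
  {0..<n} -> {0..<n} -> {0..<n}.  Axiom SH1 holds automatically for the chain.\<close>

definition is_semiHeyting_chain_op :: "nat \<Rightarrow> (nat \<Rightarrow> nat \<Rightarrow> nat) \<Rightarrow> bool" where
  "is_semiHeyting_chain_op n imp \<longleftrightarrow>
     imp \<in> {0..<n} \<rightarrow>\<^sub>E ({0..<n} \<rightarrow>\<^sub>E {0..<n}) \<and>
     (\<forall>x\<in>{0..<n}. \<forall>y\<in>{0..<n}. min x (imp x y) = min x y) \<and>
     (\<forall>x\<in>{0..<n}. \<forall>y\<in>{0..<n}. \<forall>z\<in>{0..<n}.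
        min x (imp y z) = min x (imp (min x y) (min x z))) \<and>
     (\<forall>x\<in>{0..<n}. imp x x = n - 1)"

definition N_SH :: "nat \<Rightarrow> nat" where
  "N_SH n = card {imp. is_semiHeyting_chain_op n imp}"

end

theory Submission
  imports Defs
begin

definition Bset :: "nat \<Rightarrow> nat \<Rightarrow> (nat\<Rightarrow>nat) set" where
"Bset y t = {g \<in> {y<..t} \<rightarrow>\<^sub>E {y..t}. \<forall>x z. y<x \<longrightarrow> x<z \<longrightarrow> z\<le>t \<longrightarrow> min x (g z) = min x (g x)}"

fun aa :: "nat \<Rightarrow> nat" where "aa 0 = 1" | "aa (Suc m) = 1 + Suc m * aa m"

lemma Bset_fin: "finite (Bset y t)"
  unfolding Bset_def by (rule finite_subset[of _ "{y<..t} \<rightarrow>\<^sub>E {y..t}"]) (auto intro: finite_PiE)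

lemma Bset_base: "Bset t t = {\<lambda>_. undefined}"
  unfolding Bset_def by auto

lemma Bset_step:
  assumes "y < t"
  shows "Bset y t = insert (\<lambda>z\<in>{y<..t}. y) ((\<lambda>(v,h). h(Suc y:=v)) ` ({Suc y..t} \<times> Bset (Suc y) t))" (is "_ = ?R")
proof
  show "Bset y t \<subseteq> ?R"
  proof
    fix g assume g: "g \<in> Bset y t"
    have gE: "g \<in> {y<..t} \<rightarrow>\<^sub>E {y..t}" and gC: "\<And>x z. y<x \<Longrightarrow> x<z \<Longrightarrow> z\<le>t \<Longrightarrow> min x (g z) = min x (g x)"
      using g unfolding Bset_def by auto
    have g1: "g (Suc y) \<in> {y..t}" using gE assms by auto
    show "g \<in> insert (\<lambda>z\<in>{y<..t}. y) ((\<lambda>(v,h). h(Suc y:=v)) ` ({Suc y..t} \<times> Bset (Suc y) t))"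
    proof (cases "g (Suc y) = y")
      case True
      have "g = (\<lambda>z\<in>{y<..t}. y)"
      proof
        fix z show "g z = (\<lambda>z\<in>{y<..t}. y) z"
        proof (cases "z \<in> {y<..t}")
          case True
          show ?thesis
          proof (cases "z = Suc y")
            case False
            then have "min (Suc y) (g z) = min (Suc y) (g (Suc y))" using gC[of "Suc y" z] True by auto
            then show ?thesis using \<open>g (Suc y) = y\<close> True by (auto simp: min_def split: if_splits)
          qed (use \<open>g (Suc y) = y\<close> True in auto)
        qed (use gE in auto)
      qed
      then show ?thesis by simp
    next
      case False
      define h where "h = restrict g {Suc y<..t}"
      have hB: "h \<in> Bset (Suc y) t"
        unfolding Bset_def
      proof (intro CollectI conjI allI impI)
        show "h \<in> {Suc y<..t} \<rightarrow>\<^sub>E {Suc y..t}"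
        proof (rule PiE_I)
          fix z assume z: "z \<in> {Suc y<..t}"
          have "min (Suc y) (g z) = min (Suc y) (g (Suc y))" using gC[of "Suc y" z] z by auto
          moreover have "g z \<in> {y..t}" using gE z by auto
          ultimately show "h z \<in> {Suc y..t}" using False g1 z unfolding h_def by (auto simp: min_def split: if_splits)
        qed (auto simp: h_def)
        fix x z assume "Suc y < x" "x < z" "z \<le> t"
        then show "min x (h z) = min x (h x)" using gC[of x z] unfolding h_def by auto
      qed
      have "g = h(Suc y := g (Suc y))"
      proof
        fix z show "g z = (h(Suc y := g (Suc y))) z"
          using gE assms by (cases "z \<in> {y<..t}") (auto simp: h_def)
      qed
      moreover have "g (Suc y) \<in> {Suc y..t}" using g1 False by auto
      ultimately have "g = (\<lambda>(v,h). h(Suc y:=v)) (g (Suc y), h)" "(g (Suc y), h) \<in> {Suc y..t} \<times> Bset (Suc y) t"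
        using hB by auto
      then show ?thesis by blast
    qed
  qed
next
  show "insert (\<lambda>z\<in>{y<..t}. y) ((\<lambda>(v,h). h(Suc y:=v)) ` ({Suc y..t} \<times> Bset (Suc y) t)) \<subseteq> Bset y t"
  proof
    fix g assume "g \<in> insert (\<lambda>z\<in>{y<..t}. y) ((\<lambda>(v,h). h(Suc y:=v)) ` ({Suc y..t} \<times> Bset (Suc y) t))"
    then consider "g = (\<lambda>z\<in>{y<..t}. y)" | v h where "v \<in> {Suc y..t}" "h \<in> Bset (Suc y) t" "g = h(Suc y := v)"
      by auto
    then show "g \<in> Bset y t"
    proof cases
      case 1
      have "(\<lambda>z\<in>{y<..t}. y) \<in> {y<..t} \<rightarrow>\<^sub>E {y..t}" using assms by auto
      moreover have "\<forall>x z. y<x \<longrightarrow> x<z \<longrightarrow> z\<le>t \<longrightarrow> min x ((\<lambda>z\<in>{y<..t}. y) z) = min x ((\<lambda>z\<in>{y<..t}. y) x)"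
        by simp
      ultimately show ?thesis using 1 unfolding Bset_def by blast
    next
      case 2
      have hE: "h \<in> {Suc y<..t} \<rightarrow>\<^sub>E {Suc y..t}" and hC: "\<And>x z. Suc y<x \<Longrightarrow> x<z \<Longrightarrow> z\<le>t \<Longrightarrow> min x (h z) = min x (h x)"
        using 2 unfolding Bset_def by auto
      show ?thesis unfolding Bset_def
      proof (intro CollectI conjI allI impI)
        show "g \<in> {y<..t} \<rightarrow>\<^sub>E {y..t}"
        proof (rule PiE_I)
          fix z assume z: "z \<in> {y<..t}"
          show "g z \<in> {y..t}"
          proof (cases "z = Suc y")
            case False
            then have "z \<in> {Suc y<..t}" using z by auto
            then have "h z \<in> {Suc y..t}" using hE by auto
            then show ?thesis using 2 False by auto
          qed (use 2 in auto)
        next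
          fix z assume z: "z \<notin> {y<..t}"
          then show "g z = undefined" using 2 hE by (auto simp: PiE_def extensional_def)
        qed
        fix x z assume xz: "y < x" "x < z" "z \<le> t"
        show "min x (g z) = min x (g x)"
        proof (cases "x = Suc y")
          case True
          have "h z \<in> {Suc y..t}" using hE xz True by auto
          then show ?thesis using True 2 xz by (auto simp: min_def)
        next
          case False
          then show ?thesis using hC[of x z] xz 2 by auto
        qed
      qed
    qed
  qed
qed

lemma card_Bset: "y \<le> t \<Longrightarrow> card (Bset y t) = aa (t - y)"
proof (induction "t - y" arbitrary: y)
  case 0 then have "y = t" by simp
  then show ?case by (simp add: Bset_base)
next
  case (Suc m)
  then have yt: "y < t" and m: "m = t - Suc y" by auto
  have IH: "card (Bset (Suc y) t) = aa m" using Suc.hyps(1)[of "Suc y"] m yt by auto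
  have inj: "inj_on (\<lambda>(v,h). h(Suc y:=v)) ({Suc y..t} \<times> Bset (Suc y) t)"
  proof (rule inj_onI, clarify)
    fix v h v' h' assume A: "v \<in> {Suc y..t}" "h \<in> Bset (Suc y) t" "v' \<in> {Suc y..t}" "h' \<in> Bset (Suc y) t"
      and eq: "h(Suc y := v) = h'(Suc y := v')"
    have "v = v'" using fun_cong[OF eq, of "Suc y"] by simp
    moreover have "h = h'"
    proof
      fix z
      have "h (Suc y) = undefined" "h' (Suc y) = undefined" using A unfolding Bset_def by auto
      then show "h z = h' z" using fun_cong[OF eq, of z] by (cases "z = Suc y") auto
    qed
    ultimately show "v = v' \<and> h = h'" by simp
  qed
  have notin: "(\<lambda>z\<in>{y<..t}. y) \<notin> (\<lambda>(v,h). h(Suc y:=v)) ` ({Suc y..t} \<times> Bset (Suc y) t)"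
  proof
    assume "(\<lambda>z\<in>{y<..t}. y) \<in> (\<lambda>(v,h). h(Suc y:=v)) ` ({Suc y..t} \<times> Bset (Suc y) t)"
    then obtain v h where "v \<in> {Suc y..t}" "(\<lambda>z\<in>{y<..t}. y) = h(Suc y:=v)" by auto
    then have "(\<lambda>z\<in>{y<..t}. y) (Suc y) = (h(Suc y:=v)) (Suc y)" by simp
    then show False using yt \<open>v \<in> {Suc y..t}\<close> by auto
  qed
  have "card (Bset y t) = Suc (card ({Suc y..t} \<times> Bset (Suc y) t))"
    using Bset_step[OF yt] notin card_image[OF inj] Bset_fin by (simp add: card_insert_if)
  also have "\<dots> = Suc ((t - y) * aa m)" using IH by (simp add: card_cartesian_product)
  also have "\<dots> = aa (t - y)" using Suc.hyps(2)[symmetric] by simp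
  finally show ?case .
qed



definition mk :: "nat \<Rightarrow> (nat \<Rightarrow> nat \<Rightarrow> nat) \<Rightarrow> nat \<Rightarrow> nat \<Rightarrow> nat" where
"mk n G = (\<lambda>y\<in>{0..<n}. \<lambda>z\<in>{0..<n}. if z < y then z else if z = y then n-1 else G y z)"

lemma SH_to_mk:
  assumes "is_semiHeyting_chain_op n imp"
  shows "imp = mk n (\<lambda>y\<in>{0..<n}. restrict (imp y) {y<..n-1})"
    and "(\<lambda>y\<in>{0..<n}. restrict (imp y) {y<..n-1}) \<in> (\<Pi>\<^sub>E y\<in>{0..<n}. Bset y (n-1))"
proof -
  note D = assms[unfolded is_semiHeyting_chain_op_def]
  have F: "imp \<in> {0..<n} \<rightarrow>\<^sub>E ({0..<n} \<rightarrow>\<^sub>E {0..<n})" using D by (rule conjunct1)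
  have S2: "\<And>x y. x<n \<Longrightarrow> y<n \<Longrightarrow> min x (imp x y) = min x y"
    using D[THEN conjunct2, THEN conjunct1] by simp
  have S3: "min x (imp y z) = min x (imp (min x y) (min x z))" if "x<n" "y<n" "z<n" for x y z
  proof -
    have "x \<in> {0..<n}" "y \<in> {0..<n}" "z \<in> {0..<n}" using that by auto
    then show ?thesis using D[THEN conjunct2, THEN conjunct2, THEN conjunct1] by blast
  qed
  have S4: "\<And>x. x<n \<Longrightarrow> imp x x = n - 1"
    using D[THEN conjunct2, THEN conjunct2, THEN conjunct2] by simp
  have lt: "imp y z = z" if "y<n" "z<n" "z < y" for y z
    using S2[OF that(1,2)] that(3) by (auto simp: min_def split: if_splits)
  have ge: "y \<le> imp y z" if "y<n" "z<n" "y \<le> z" for y z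
    using S2[OF that(1,2)] that(3) by (auto simp: min_def split: if_splits)
  show "imp = mk n (\<lambda>y\<in>{0..<n}. restrict (imp y) {y<..n-1})"
  proof (intro ext)
    fix y z
    show "imp y z = mk n (\<lambda>y\<in>{0..<n}. restrict (imp y) {y<..n-1}) y z"
    proof (cases "y < n")
      case False then show ?thesis using F by (auto simp: mk_def PiE_def extensional_def)
    next
      case yn: True
      show ?thesis
      proof (cases "z < n")
        case False then show ?thesis using F yn by (auto simp: mk_def PiE_def extensional_def Pi_def)
      next
        case True
        then show ?thesis using yn lt S4 by (auto simp: mk_def)
      qed
    qed
  qed
  show "(\<lambda>y\<in>{0..<n}. restrict (imp y) {y<..n-1}) \<in> (\<Pi>\<^sub>E y\<in>{0..<n}. Bset y (n-1))"
  proof (rule PiE_I)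
    fix y assume y: "y \<in> {0..<n}"
    have bd: "imp y z < n" if "z < n" for z using F y that by (auto simp: PiE_def Pi_def)
    have "restrict (imp y) {y<..n-1} \<in> Bset y (n-1)"
      unfolding Bset_def
    proof (intro CollectI conjI allI impI)
      show "restrict (imp y) {y<..n - 1} \<in> {y<..n - 1} \<rightarrow>\<^sub>E {y..n - 1}"
      proof (rule PiE_I)
        fix z assume "z \<in> {y<..n-1}"
        then show "restrict (imp y) {y<..n - 1} z \<in> {y..n - 1}"
          using ge[of y z] bd[of z] y by (cases n) auto
      qed auto
      fix x z assume xz: "y < x" "x < z" "z \<le> n - 1"
      have "min x (imp y z) = min x (imp (min x y) (min x z))" using S3[of x y z] xz y by auto
      also have "\<dots> = min x (imp y x)" using xz by (simp add: min_def)
      finally show "min x (restrict (imp y) {y<..n - 1} z) = min x (restrict (imp y) {y<..n - 1} x)"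
        using xz by auto
    qed
    then show "(\<lambda>y\<in>{0..<n}. restrict (imp y) {y<..n-1}) y \<in> Bset y (n-1)"
      using y by simp
  qed auto
qed


lemma mkv: "y < n \<Longrightarrow> z < n \<Longrightarrow> mk n G y z = (if z < y then z else if z = y then n-1 else G y z)"
  by (simp add: mk_def)

lemma mk_SH:
  assumes n: "n \<ge> 1" and G: "G \<in> (\<Pi>\<^sub>E y\<in>{0..<n}. Bset y (n-1))"
  shows "is_semiHeyting_chain_op n (mk n G)"
proof -
  have GB: "G y \<in> Bset y (n-1)" if "y < n" for y using G that by (simp add: PiE_iff)
  have Gv: "y \<le> G y z \<and> G y z \<le> n-1" if "y < z" "z < n" for y z
  proof -
    have "G y \<in> {y<..n-1} \<rightarrow>\<^sub>E {y..n-1}" using GB[of y] that unfolding Bset_def by simp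
    moreover have "z \<in> {y<..n-1}" using that by auto
    ultimately have "G y z \<in> {y..n-1}" by (rule PiE_mem)
    then show ?thesis by simp
  qed
  have GC: "min x (G y z) = min x (G y x)" if "y < x" "x < z" "z < n" for x y z
  proof -
    have "\<forall>x z. y<x \<longrightarrow> x<z \<longrightarrow> z\<le>n-1 \<longrightarrow> min x (G y z) = min x (G y x)"
      using GB[of y] that unfolding Bset_def by simp
    moreover have "z \<le> n-1" using that by simp
    ultimately show ?thesis using that by blast
  qed
  let ?M = "mk n G"
  have Mlt: "?M y z < n" if "y < n" "z < n" for y z
    using that Gv[of y z] n by (auto simp: mkv)
  have Mge: "min y z \<le> ?M y z" if "y < n" "z < n" for y z
    using that Gv[of y z] n by (auto simp: mkv)
  show ?thesis unfolding is_semiHeyting_chain_op_def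
  proof (intro conjI ballI)
    show "?M \<in> {0..<n} \<rightarrow>\<^sub>E ({0..<n} \<rightarrow>\<^sub>E {0..<n})"
      using Mlt by (auto simp: mk_def PiE_def Pi_def extensional_def)
  next
    fix x y assume xy: "x \<in> {0..<n}" "y \<in> {0..<n}"
    show "min x (?M x y) = min x y"
      using xy Gv[of x y] by (auto simp: mkv min_def)
  next
    fix x assume "x \<in> {0..<n}"
    then show "?M x x = n - 1" by (simp add: mkv)
  next
    fix x y z assume xyz: "x \<in> {0..<n}" "y \<in> {0..<n}" "z \<in> {0..<n}"
    then have X: "x < n" "y < n" "z < n" by auto
    show "min x (?M y z) = min x (?M (min x y) (min x z))"
    proof (cases "y \<le> x")
      case yx: True
      show ?thesis
      proof (cases "z \<le> x")
        case True then show ?thesis using yx by (simp add: min_absorb2)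
      next
        case zx: False
        have L: "?M y z = G y z" using X yx zx by (simp add: mkv)
        have R: "min x (?M (min x y) (min x z)) = min x (?M y x)" using yx zx by (simp add: min_def)
        show ?thesis
        proof (cases "y = x")
          case True
          then show ?thesis using L R X Gv[of y z] zx by (simp add: mkv min_def)
        next
          case False
          then have "y < x" using yx by simp
          then show ?thesis using L R X GC[of y x z] zx by (simp add: mkv)
        qed
      qed
    next
      case xy: False
      show ?thesis
      proof (cases "z \<le> x")
        case True
        have L: "?M y z = z" using X xy True by (simp add: mkv)
        have "?M (min x y) (min x z) = ?M x z" using xy True by (simp add: min_def)
        then show ?thesis using L X True by (cases "z = x") (auto simp: mkv min_def)
      next
        case False
        have "?M (min x y) (min x z) = ?M x x" using xy False by (simp add: min_def)
        also have "\<dots> = n - 1" using X by (simp add: mkv)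
        finally have R: "min x (?M (min x y) (min x z)) = x" using X by simp
        have "x < ?M y z" using Mge[of y z] X xy False by simp
        then show ?thesis using R by simp
      qed
    qed
  qed
qed

lemma mk_inj: "inj_on (mk n) (\<Pi>\<^sub>E y\<in>{0..<n}. Bset y (n-1))"
proof (rule inj_onI)
  fix G H assume G: "G \<in> (\<Pi>\<^sub>E y\<in>{0..<n}. Bset y (n-1))" and H: "H \<in> (\<Pi>\<^sub>E y\<in>{0..<n}. Bset y (n-1))"
    and eq: "mk n G = mk n H"
  show "G = H"
  proof (intro ext)
    fix y z
    show "G y z = H y z"
    proof (cases "y < n")
      case False then show ?thesis using G H by (auto simp: PiE_def extensional_def)
    next
      case True
      have GB: "G y \<in> {y<..n-1} \<rightarrow>\<^sub>E {y..n-1}" "H y \<in> {y<..n-1} \<rightarrow>\<^sub>E {y..n-1}"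
        using G H True unfolding Bset_def by auto
      show ?thesis
      proof (cases "z \<in> {y<..n-1}")
        case False then show ?thesis using GB by (auto simp: PiE_def extensional_def)
      next
        case zin: True
        then have "z < n" "y < z" by auto
        then have "mk n G y z = G y z" "mk n H y z = H y z" using True by (auto simp: mkv)
        then show ?thesis using eq by simp
      qed
    qed
  qed
qed

lemma SH_set: "n \<ge> 1 \<Longrightarrow> {imp. is_semiHeyting_chain_op n imp} = mk n ` (\<Pi>\<^sub>E y\<in>{0..<n}. Bset y (n-1))"
proof (intro equalityI subsetI)
  fix imp assume "imp \<in> {imp. is_semiHeyting_chain_op n imp}"
  then have A: "is_semiHeyting_chain_op n imp" by simp
  show "imp \<in> mk n ` (\<Pi>\<^sub>E y\<in>{0..<n}. Bset y (n-1))"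
    using SH_to_mk[OF A] by (rule image_eqI)
next
  fix imp assume n: "n \<ge> 1" and "imp \<in> mk n ` (\<Pi>\<^sub>E y\<in>{0..<n}. Bset y (n-1))"
  then obtain G where "G \<in> (\<Pi>\<^sub>E y\<in>{0..<n}. Bset y (n-1))" "imp = mk n G" by blast
  then show "imp \<in> {imp. is_semiHeyting_chain_op n imp}" using mk_SH[OF n] by simp
qed

lemma N_prod: "n \<ge> 1 \<Longrightarrow> N_SH n = (\<Prod>k<n. aa k)"
proof -
  assume n: "n \<ge> 1"
  have "N_SH n = card (\<Pi>\<^sub>E y\<in>{0..<n}. Bset y (n-1))"
    unfolding N_SH_def SH_set[OF n] by (rule card_image[OF mk_inj])
  also have "\<dots> = (\<Prod>y\<in>{0..<n}. card (Bset y (n-1)))" by (simp add: card_PiE)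
  also have "\<dots> = (\<Prod>y<n. aa (n - Suc y))"
    by (rule prod.cong) (auto simp: card_Bset)
  also have "\<dots> = (\<Prod>k<n. aa k)" by (rule prod.nat_diff_reindex)
  finally show ?thesis .
qed

lemma aa_sum: "real (aa m) = (\<Sum>i=0..m. fact m / fact i)"
proof (induction m)
  case 0 then show ?case by simp
next
  case (Suc m)
  have "(\<Sum>i=0..Suc m. fact (Suc m) / fact i :: real) = (\<Sum>i=0..m. fact (Suc m) / fact i) + 1"
    by simp
  also have "(\<Sum>i=0..m. fact (Suc m) / fact i :: real) = real (Suc m) * (\<Sum>i=0..m. fact m / fact i)"
    by (simp add: sum_distrib_left)
  finally show ?case using Suc by (simp add: algebra_simps)
qed

theorem mainTheorem3:
  shows "N_SH 1 = 1 \<and>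
    (\<forall>n::nat. n \<ge> 2 \<longrightarrow>
       real (N_SH n) = (\<Sum>i=0..n-1. fact (n-1) / fact i) * real (N_SH (n-1)))"
proof (intro conjI allI impI)
  show "N_SH 1 = 1" using N_prod[of 1] by simp
  fix n :: nat assume n: "n \<ge> 2"
  then obtain m where m: "n = Suc m" "m \<ge> 1" by (cases n) auto
  have "N_SH n = aa m * N_SH m" using N_prod[of n] N_prod[of m] m by simp
  then show "real (N_SH n) = (\<Sum>i=0..n-1. fact (n-1) / fact i) * real (N_SH (n-1))"
    using m aa_sum[of m] by simp
qed

end
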